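(* Let $s=s(L)$ satisfy $\log^9L\le s\le L/\log^5L$. Let $\Xi_0$ be the random subset of $\mathbb{Z}_L^+=\{0,\dots,\lfloor(L-1)/2\rfloor\}$ obtained by including each element independently with probability $s/L$, and let $\Xi=\Xi_0\cup(-\Xi_0)$ (the support of the symmetric Bernoulli-Gaussian distribution with mean $0$, variance $\zeta^2$ and sparsity parameter $s$). Then for $L$ large enough, the distribution of $\Xi$ is typically $s$-sparse with sparsity constants $(1/2,2)$, and is $s/32$-cosine generic.
   Context: $\mathbb{Z}_L=\{\lfloor-(L-1)/2\rfloor,\dots,\lfloor(L-1)/2\rfloor\}$. A distribution of random subsets $\Xi\subset\mathbb{Z}_L$ is typically $s$-sparse with sparsity constants $(\alpha,\beta)$ if $\alpha s\le|\Xi|\le\beta s$ with probability $1-o_L(1)$. With $\mathcal{V}(\Xi,a)=\mathbf{1}_{\{0\in\Xi\}}+2\sum_{k\in\Xi\setminus\{0\}}\cos^2(2\pi ak/L)$, the distribution is $\Gamma$-cosine generic if with probability $1-o_L(1)$, $\min_{a\in\mathbb{Z}_L}\mathcal{V}(\Xi,a)\ge\Gamma(1-o_L(1))$. *)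

theory Defs
  imports "HOL-Probability.Probability"
begin

definition ZL :: "nat \<Rightarrow> int set" where
  "ZL L = {\<lfloor>- (real L - 1) / 2\<rfloor> .. \<lfloor>(real L - 1) / 2\<rfloor>}"

definition ZLplus :: "nat \<Rightarrow> int set" where
  "ZLplus L = {0 .. \<lfloor>(real L - 1) / 2\<rfloor>}"

definition cosV :: "nat \<Rightarrow> int set \<Rightarrow> int \<Rightarrow> real" where
  "cosV L Xi a = (if 0 \<in> Xi then 1 else 0)
     + 2 * (\<Sum>k\<in>Xi - {0}. (cos (2 * pi * real_of_int a * real_of_int k / real L))\<^sup>2)"

definition typically_sparse :: "(nat \<Rightarrow> int set pmf) \<Rightarrow> (nat \<Rightarrow> real) \<Rightarrow> real \<Rightarrow> real \<Rightarrow> bool" where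
  "typically_sparse D s \<alpha> \<beta> \<longleftrightarrow>
     ((\<lambda>L. measure_pmf.prob (D L) {Xi. \<alpha> * s L \<le> real (card Xi) \<and> real (card Xi) \<le> \<beta> * s L})
        \<longlongrightarrow> 1) sequentially"

definition cosine_generic :: "(nat \<Rightarrow> int set pmf) \<Rightarrow> (nat \<Rightarrow> real) \<Rightarrow> bool" where
  "cosine_generic D \<Gamma> \<longleftrightarrow>
     (\<exists>\<epsilon> :: nat \<Rightarrow> real. (\<epsilon> \<longlongrightarrow> 0) sequentially \<and>
        ((\<lambda>L. measure_pmf.prob (D L) {Xi. \<forall>a\<in>ZL L. cosV L Xi a \<ge> \<Gamma> L * (1 - \<epsilon> L)})
          \<longlongrightarrow> 1) sequentially)"

definition sym_bernoulli_support :: "(nat \<Rightarrow> real) \<Rightarrow> nat \<Rightarrow> int set pmf" where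
  "sym_bernoulli_support s L =
     map_pmf (\<lambda>f. let X0 = {k \<in> ZLplus L. f k} in X0 \<union> uminus ` X0)
       (Pi_pmf (ZLplus L) False (\<lambda>_. bernoulli_pmf (s L / real L)))"

end

theory Submission
  imports Defs "HOL-Real_Asymp.Real_Asymp"
begin


lemma finite_set_Pi_bern:
  assumes "finite I"
  shows "finite (set_pmf (Pi_pmf I False (\<lambda>_. bernoulli_pmf p)))"
  using assms by (simp add: set_Pi_pmf finite_PiE_dflt)

lemma mgf_bound:
  fixes I :: "'a set" and w :: "'a \<Rightarrow> real"
  assumes fin: "finite I" and p: "0 \<le> p" "p \<le> 1"
  shows "measure_pmf.expectation (Pi_pmf I False (\<lambda>_. bernoulli_pmf p))
           (\<lambda>f. exp (\<Sum>k\<in>I. if f k then w k else 0)) \<le> exp (p * (\<Sum>k\<in>I. exp (w k) - 1))"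
proof -
  have eq: "(\<lambda>f. exp (\<Sum>k\<in>I. if f k then w k else 0)) = (\<lambda>f. \<Prod>k\<in>I. (\<lambda>k b. if b then exp (w k) else 1) k (f k))"
    proof (rule ext)
    fix f
    have "exp (\<Sum>k\<in>I. if f k then w k else 0) = (\<Prod>k\<in>I. exp (if f k then w k else 0))"
      by (rule exp_sum[OF fin])
    also have "\<dots> = (\<Prod>k\<in>I. if f k then exp (w k) else 1)"
      by (rule prod.cong) auto
    finally show "exp (\<Sum>k\<in>I. if f k then w k else 0) = (\<Prod>k\<in>I. (\<lambda>k b. if b then exp (w k) else 1) k (f k))"
      by simp
  qed
  have "measure_pmf.expectation (Pi_pmf I False (\<lambda>_. bernoulli_pmf p))
           (\<lambda>f. exp (\<Sum>k\<in>I. if f k then w k else 0)) = (\<Prod>k\<in>I. measure_pmf.expectation (bernoulli_pmf p) (\<lambda>b. if b then exp (w k) else 1))"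
    unfolding eq
    by (rule expectation_prod_Pi_pmf) (auto simp: fin intro!: integrable_measure_pmf_finite)
  also have "\<dots> = (\<Prod>k\<in>I. 1 + p * (exp (w k) - 1))"
    using p by (intro prod.cong) (auto simp: algebra_simps)
  also have "\<dots> \<le> (\<Prod>k\<in>I. exp (p * (exp (w k) - 1)))"
  proof (rule prod_mono, safe)
    fix k assume "k \<in> I"
    have "0 \<le> p * exp (w k)" using p by simp
    moreover have "1 + p * (exp (w k) - 1) = (1 - p) + p * exp (w k)" by (simp add: algebra_simps)
    ultimately show "0 \<le> 1 + p * (exp (w k) - 1)" using p by linarith
    show "1 + p * (exp (w k) - 1) \<le> exp (p * (exp (w k) - 1))" by (rule exp_ge_add_one_self)
  qed
  also have "\<dots> = exp (p * (\<Sum>k\<in>I. exp (w k) - 1))"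
    by (simp add: exp_sum[OF fin] sum_distrib_left)
  finally show ?thesis .
qed

lemma tail_bound:
  fixes I :: "'a set" and w :: "'a \<Rightarrow> real"
  assumes fin: "finite I" and p: "0 \<le> p" "p \<le> 1"
  shows "measure_pmf.prob (Pi_pmf I False (\<lambda>_. bernoulli_pmf p))
           {f. c \<le> (\<Sum>k\<in>I. if f k then w k else 0)} \<le> exp (- c + p * (\<Sum>k\<in>I. exp (w k) - 1))"
proof -
  let ?Q = "Pi_pmf I False (\<lambda>_. bernoulli_pmf p)"
  let ?X = "\<lambda>f. (\<Sum>k\<in>I. if f k then w k else 0)"
  have "measure_pmf.prob ?Q {f. c \<le> ?X f} = measure_pmf.expectation ?Q (indicator {f. c \<le> ?X f})"
    by simp
  also have "\<dots> \<le> measure_pmf.expectation ?Q (\<lambda>f. exp (- c) * exp (?X f))"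
  proof (rule integral_mono)
    show "integrable (measure_pmf ?Q) (indicator {f. c \<le> ?X f} :: _ \<Rightarrow> real)"
      by (rule integrable_measure_pmf_finite, rule finite_set_Pi_bern[OF fin])
    show "integrable (measure_pmf ?Q) (\<lambda>f. exp (- c) * exp (?X f))"
      by (rule integrable_measure_pmf_finite, rule finite_set_Pi_bern[OF fin])
    fix f
    show "indicator {f. c \<le> ?X f} f \<le> exp (- c) * exp (?X f)"
    proof (cases "c \<le> ?X f")
      case True
      have "1 \<le> exp (?X f - c)" using True by simp
      then show ?thesis using True by (simp add: exp_diff exp_minus field_simps)
    qed (simp)
  qed
  also have "\<dots> = exp (- c) * measure_pmf.expectation ?Q (\<lambda>f. exp (?X f))"
    by simp
  also have "\<dots> \<le> exp (- c) * exp (p * (\<Sum>k\<in>I. exp (w k) - 1))"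
    by (rule mult_left_mono[OF mgf_bound[OF fin p]]) simp
  also have "\<dots> = exp (- c + p * (\<Sum>k\<in>I. exp (w k) - 1))"
    by (simp add: mult_exp_exp)
  finally show ?thesis .
qed



lemma cos_pair: "7/16 \<le> (cos (x::real))\<^sup>2 + (cos (2*x))\<^sup>2"
proof -
  have c: "cos (2*x) = 2*(cos x)\<^sup>2 - 1" by (simp add: cos_double_cos)
  have "0 \<le> (2*(cos x)\<^sup>2 - 3/4)\<^sup>2" by simp
  then show ?thesis unfolding c by (simp add: power2_eq_square algebra_simps)
qed

lemma sum_cos_lower:
  fixes \<theta> :: real and M :: int and N :: nat
  assumes "2 * int N \<le> M"
  shows "7/32 * real N \<le> (\<Sum>k\<in>{1..M}. (cos (\<theta> * of_int k))\<^sup>2)"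
proof -
  define g where "g k = (cos (\<theta> * of_int k))\<^sup>2" for k :: int
  have g0: "0 \<le> g k" for k by (simp add: g_def)
  have h1: "(\<Sum>j\<in>{1..int N}. g j) \<le> (\<Sum>k\<in>{1..M}. g k)"
    by (rule sum_mono2) (use assms g0 in auto)
  have "(\<Sum>j\<in>{1..int N}. g (2*j)) = (\<Sum>k\<in>(\<lambda>j. 2*j) ` {1..int N}. g k)"
    by (subst sum.reindex) (auto simp: inj_on_def)
  also have "\<dots> \<le> (\<Sum>k\<in>{1..M}. g k)"
    by (rule sum_mono2) (use assms g0 in auto)
  finally have h2: "(\<Sum>j\<in>{1..int N}. g (2*j)) \<le> (\<Sum>k\<in>{1..M}. g k)" .
  have "(\<Sum>j\<in>{1..int N}. (7/16::real)) \<le> (\<Sum>j\<in>{1..int N}. g j + g (2*j))"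
  proof (rule sum_mono)
    fix j :: int
    have "g (2*j) = (cos (2 * (\<theta> * of_int j)))\<^sup>2" by (simp add: g_def algebra_simps)
    then show "7/16 \<le> g j + g (2*j)" using cos_pair[of "\<theta> * of_int j"] by (simp add: g_def)
  qed
  then have "7/16 * real N \<le> (\<Sum>j\<in>{1..int N}. g j) + (\<Sum>j\<in>{1..int N}. g (2*j))"
    by (simp add: sum.distrib)
  with h1 h2 show ?thesis unfolding g_def by linarith
qed

lemma exp_neg_convex:
  fixes w :: real
  assumes "0 \<le> w" "w \<le> 1"
  shows "exp (- w) - 1 \<le> - (3/5) * w"
proof -
  have "exp (1 * ((1 - w) *\<^sub>R 0 + w *\<^sub>R (-1))) \<le> (1 - w) * exp (1 * 0) + w * exp (1 * (-1::real))"
    by (rule convex_onD[OF convex_on_exp[of 1]]) (use assms in auto)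
  then have "exp (- w) \<le> (1 - w) + w * exp (-1)" by simp
  moreover have "exp (-1::real) \<le> 2/5"
  proof -
    have "5/2 \<le> exp (1::real)" using exp_lower_Taylor_quadratic[of 1] by simp
    then show ?thesis by (simp add: exp_minus field_simps)
  qed
  ultimately have "exp (- w) \<le> 1 - w + w * (2/5)"
    using assms by (smt (verit) mult_left_mono \<open>exp (- w) \<le> (1 - w) + w * exp (-1)\<close>)
  then show ?thesis by simp
qed

lemma prob_ge_compl:
  assumes "- A \<subseteq> B"
  shows "1 - measure_pmf.prob M B \<le> measure_pmf.prob M A"
proof -
  have "measure_pmf.prob M (- A) = 1 - measure_pmf.prob M A"
    using measure_pmf.prob_compl[of A M] by (simp add: Compl_eq_Diff_UNIV)
  moreover have "measure_pmf.prob M (- A) \<le> measure_pmf.prob M B"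
    by (rule measure_pmf.finite_measure_mono[OF assms]) simp
  ultimately show ?thesis by simp
qed



lemma M_bounds:
  assumes "1 \<le> L"
  shows "0 \<le> \<lfloor>(real L - 1) / 2\<rfloor>"
    and "(real L - 2) / 2 \<le> real_of_int \<lfloor>(real L - 1) / 2\<rfloor>"
    and "real_of_int \<lfloor>(real L - 1) / 2\<rfloor> \<le> (real L - 1) / 2"
proof -
  have a: "real_of_int \<lfloor>(real L - 1) / 2\<rfloor> \<le> (real L - 1) / 2"
    and b: "(real L - 1) / 2 < real_of_int \<lfloor>(real L - 1) / 2\<rfloor> + 1"
    using floor_correct[of "(real L - 1) / 2"] by auto
  show "real_of_int \<lfloor>(real L - 1) / 2\<rfloor> \<le> (real L - 1) / 2" by (fact a)
  define F where "F = \<lfloor>(real L - 1) / 2\<rfloor>"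
  have b': "(real L - 1) / 2 < real_of_int F + 1" using b unfolding F_def .
  have "real L - 1 < 2 * (real_of_int F + 1)" using b' by (simp add: field_simps)
  then have "real_of_int (int L - 3) < real_of_int (2 * F)" by simp
  then have "real_of_int (int L - 3) < real_of_int (2 * \<lfloor>(real L - 1) / 2\<rfloor>)" by (simp add: F_def)
  then have "int L - 3 < 2 * \<lfloor>(real L - 1) / 2\<rfloor>" by (simp only: of_int_less_iff)
  then have "int L - 2 \<le> 2 * \<lfloor>(real L - 1) / 2\<rfloor>" by simp
  then have "real_of_int (int L - 2) \<le> real_of_int (2 * \<lfloor>(real L - 1) / 2\<rfloor>)" by (simp only: of_int_le_iff)
  then show "(real L - 2) / 2 \<le> real_of_int \<lfloor>(real L - 1) / 2\<rfloor>" by simp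
  show "0 \<le> \<lfloor>(real L - 1) / 2\<rfloor>" using assms by simp
qed

lemma card_sym:
  fixes X0 :: "int set"
  assumes fin: "finite X0" and nn: "\<forall>k\<in>X0. 0 \<le> k"
  shows "card (X0 \<union> uminus ` X0) \<le> 2 * card X0"
    and "2 * card X0 \<le> card (X0 \<union> uminus ` X0) + 1"
proof -
  have "card (X0 \<union> uminus ` X0) \<le> card X0 + card (uminus ` X0)" by (rule card_Un_le)
  also have "card (uminus ` X0) \<le> card X0" by (rule card_image_le[OF fin])
  finally show "card (X0 \<union> uminus ` X0) \<le> 2 * card X0" by simp
  have disj: "X0 \<inter> uminus ` (X0 - {0}) = {}"
  proof (rule ccontr)
    assume "X0 \<inter> uminus ` (X0 - {0}) \<noteq> {}"
    then obtain y where "y \<in> X0" "y \<noteq> 0" "- y \<in> X0" by auto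
    with nn have "0 \<le> y" "0 \<le> - y" by auto
    with \<open>y \<noteq> 0\<close> show False by simp
  qed
  have "card (X0 \<union> uminus ` (X0 - {0})) = card X0 + card (uminus ` (X0 - {0}))"
    by (rule card_Un_disjoint) (use fin disj in auto)
  also have "card (uminus ` (X0 - {0})) = card (X0 - {0})"
    by (rule card_image) (simp add: inj_on_def)
  finally have e: "card (X0 \<union> uminus ` (X0 - {0})) = card X0 + card (X0 - {0})" .
  have "card (X0 \<union> uminus ` (X0 - {0})) \<le> card (X0 \<union> uminus ` X0)"
    by (rule card_mono) (use fin in auto)
  moreover have "card X0 \<le> card (X0 - {0}) + 1"
    using fin by (cases "0 \<in> X0") (auto simp: card_Diff_singleton_if Suc_diff_1 card_gt_0_iff)
  ultimately show "2 * card X0 \<le> card (X0 \<union> uminus ` X0) + 1" using e by linarith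
qed

lemma card_filter_sum:
  assumes "finite I"
  shows "real (card {k\<in>I. f k}) = (\<Sum>k\<in>I. if f k then 1 else 0)"
proof -
  have "real (card {k\<in>I. f k}) = (\<Sum>k\<in>{k\<in>I. f k}. (1::real))" by simp
  also have "\<dots> = (\<Sum>k\<in>I. if f k then 1 else 0)"
    using sum.inter_filter[OF assms, of "\<lambda>_. (1::real)" f] by simp
  finally show ?thesis .
qed

lemma sparse_L:
  assumes L: "100 \<le> L" and S: "0 < S" "S \<le> real L"
  shows "1 - exp (1 - S/20) - exp (- S/10) \<le> measure_pmf.prob
     (map_pmf (\<lambda>f. let X0 = {k \<in> ZLplus L. f k} in X0 \<union> uminus ` X0)
       (Pi_pmf (ZLplus L) False (\<lambda>_. bernoulli_pmf (S / real L))))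
     {Xi. 1/2 * S \<le> real (card Xi) \<and> real (card Xi) \<le> 2 * S}"
proof -
  define I where "I = ZLplus L"
  define M where "M = \<lfloor>(real L - 1) / 2\<rfloor>"
  define p where "p = S / real L"
  have I: "I = {0..M}" by (simp add: I_def M_def ZLplus_def)
  have finI: "finite I" by (simp add: I)
  have Mb: "0 \<le> M" "(real L - 2) / 2 \<le> real_of_int M" "real_of_int M \<le> (real L - 1) / 2"
    using M_bounds[of L] L by (auto simp: M_def)
  have cardI: "real (card I) = real_of_int M + 1" using Mb(1) by (simp add: I)
  have Lpos: "0 < real L" using L by simp
  have p: "0 \<le> p" "p \<le> 1" using S Lpos by (auto simp: p_def field_simps)
  have pL: "p * real L = S" using Lpos by (simp add: p_def)
  let ?Q = "Pi_pmf I False (\<lambda>_. bernoulli_pmf p)"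
  let ?X = "\<lambda>f. (\<Sum>k\<in>I. if f k then (1::real) else 0)"
  define B1 where "B1 = {f. - (S/4 + 1) \<le> (\<Sum>k\<in>I. if f k then (-1::real) else 0)}"
  define B2 where "B2 = {f. S \<le> (\<Sum>k\<in>I. if f k then (1::real) else 0)}"
  define G where "G = (\<lambda>f. let X0 = {k \<in> ZLplus L. f k} in X0 \<union> uminus ` X0) -`
     {Xi. 1/2 * S \<le> real (card Xi) \<and> real (card Xi) \<le> 2 * S}"
  have sub: "- G \<subseteq> B1 \<union> B2"
  proof
    fix f assume f: "f \<in> - G"
    show "f \<in> B1 \<union> B2"
    proof (rule ccontr)
      assume "f \<notin> B1 \<union> B2"
      moreover have "(\<Sum>k\<in>I. if f k then (-1::real) else 0) = - ?X f"
        by (subst sum_negf[symmetric]) (rule sum.cong, auto)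
      ultimately have h1: "S/4 + 1 < ?X f" and h2: "?X f < S"
        by (auto simp: B1_def B2_def)
      define X0 where "X0 = {k \<in> I. f k}"
      have cX: "real (card X0) = ?X f" unfolding X0_def by (rule card_filter_sum[OF finI])
      have "X0 \<subseteq> I" by (auto simp: X0_def)
      then have fX: "finite X0" "\<forall>k\<in>X0. 0 \<le> k" using finite_subset[OF _ finI] by (auto simp: I)
      note c = card_sym[OF fX]
      have "real (card (X0 \<union> uminus ` X0)) \<le> 2 * real (card X0)" using c(1) by linarith
      moreover have "2 * real (card X0) \<le> real (card (X0 \<union> uminus ` X0)) + 1" using c(2) by linarith
      ultimately have "f \<in> G" using h1 h2 cX by (simp add: G_def X0_def I_def Let_def)
      then show False using f by simp
    qed
  qed
  have "1 - measure_pmf.prob ?Q (B1 \<union> B2) \<le> measure_pmf.prob ?Q G"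
    by (rule prob_ge_compl[OF sub])
  moreover have "measure_pmf.prob ?Q (B1 \<union> B2) \<le> measure_pmf.prob ?Q B1 + measure_pmf.prob ?Q B2"
    by (rule measure_Un_le) auto
  moreover have "measure_pmf.prob ?Q B1 \<le> exp (1 - S/20)"
  proof -
    have "measure_pmf.prob ?Q B1 \<le> exp (- (- (S/4 + 1)) + p * (\<Sum>k\<in>I. exp (-1) - 1))"
      unfolding B1_def by (rule tail_bound[OF finI p])
    also have "\<dots> \<le> exp (1 - S/20)"
    proof -
      have e: "exp (-1) - 1 \<le> - (3/5::real)" using exp_neg_convex[of 1] by simp
      have a: "S / 2 \<le> p * (real_of_int M + 1)"
      proof -
        have "p * (real L / 2) \<le> p * (real_of_int M + 1)" using Mb p by (intro mult_left_mono) auto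
        then show ?thesis using pL by simp
      qed
      have b: "p * (\<Sum>k\<in>I. exp (-1) - 1) = p * (real_of_int M + 1) * (exp (-1) - 1)"
        using cardI by simp
      have c: "p * (real_of_int M + 1) * (exp (-1) - 1) \<le> p * (real_of_int M + 1) * (- 3/5)"
        using e p Mb by (intro mult_left_mono) auto
      have "- (- (S/4 + 1)) + p * (\<Sum>k\<in>I. exp (-1) - 1) \<le> 1 - S/20"
        using a b c by linarith
      then show ?thesis by simp
    qed
    finally show ?thesis .
  qed
  moreover have "measure_pmf.prob ?Q B2 \<le> exp (- S/10)"
  proof -
    have "measure_pmf.prob ?Q B2 \<le> exp (- S + p * (\<Sum>k\<in>I. exp 1 - 1))"
      unfolding B2_def by (rule tail_bound[OF finI p])
    also have "\<dots> \<le> exp (- S/10)"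
    proof -
      have e: "exp 1 - 1 \<le> (172/100::real)" using e_less_272 by simp
      have "p * (real_of_int M + 1) \<le> p * ((real L + 1) / 2)" using Mb p by (intro mult_left_mono) auto
      also have "\<dots> = S / 2 + S / (2 * real L)" using pL Lpos by (simp add: field_simps)
      also have "S / (2 * real L) \<le> S / 200" using L S by (intro divide_left_mono) auto
      finally have a: "p * (real_of_int M + 1) \<le> S / 2 + S / 200" by simp
      have "p * (\<Sum>k\<in>I. exp 1 - 1) = p * (real_of_int M + 1) * (exp 1 - 1)"
        using cardI by simp
      also have "\<dots> \<le> p * (real_of_int M + 1) * (172/100)"
        using e p Mb by (intro mult_left_mono) auto
      also have "\<dots> \<le> (S / 2 + S / 200) * (172/100)"
        using a by (intro mult_right_mono) auto
      finally have "p * (\<Sum>k\<in>I. exp 1 - 1) \<le> (S / 2 + S / 200) * (172/100)" .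
      then show ?thesis using S by simp
    qed
    finally show ?thesis .
  qed
  ultimately show ?thesis
    by (simp add: G_def I_def p_def)
qed



lemma cos2_le1: "(cos (x::real))\<^sup>2 \<le> 1"
  using sin_cos_squared_add[of x] zero_le_power2[of "sin x"] by linarith

lemma cosV_lower:
  fixes I :: "int set"
  assumes finI: "finite I"
  shows "2 * (\<Sum>k\<in>I. if f k then (if k = 0 then 0 else (cos (2 * pi * real_of_int a * real_of_int k / real L))\<^sup>2) else 0)
     \<le> cosV L ({k\<in>I. f k} \<union> uminus ` {k\<in>I. f k}) a"
proof -
  define c where "c k = (cos (2 * pi * real_of_int a * real_of_int k / real L))\<^sup>2" for k :: int
  define Xi where "Xi = {k\<in>I. f k} \<union> uminus ` {k\<in>I. f k}"
  have finXi: "finite Xi" using finI by (simp add: Xi_def)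
  have "(\<Sum>k\<in>I. if f k then (if k = 0 then 0 else c k) else 0) = (\<Sum>k\<in>I. if (f k \<and> k \<noteq> 0) then c k else 0)"
    by (rule sum.cong) auto
  also have "\<dots> = (\<Sum>k\<in>{k\<in>I. f k \<and> k \<noteq> 0}. c k)"
    using sum.inter_filter[OF finI, of c "\<lambda>k. f k \<and> k \<noteq> 0"] by simp
  also have "\<dots> \<le> (\<Sum>k\<in>Xi - {0}. c k)"
    by (rule sum_mono2) (use finXi in \<open>auto simp: Xi_def c_def\<close>)
  finally have "(\<Sum>k\<in>I. if f k then (if k = 0 then 0 else c k) else 0) \<le> (\<Sum>k\<in>Xi - {0}. c k)" .
  moreover have "2 * (\<Sum>k\<in>Xi - {0}. c k) \<le> cosV L Xi a"
    by (simp add: cosV_def c_def)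
  ultimately show ?thesis unfolding c_def Xi_def by linarith
qed

lemma card_ZL: "card (ZL L) \<le> 2 * L + 1"
proof -
  have "ZL L \<subseteq> {- int L .. int L}"
  proof
    fix x assume "x \<in> ZL L"
    then have x: "\<lfloor>- (real L - 1) / 2\<rfloor> \<le> x" "x \<le> \<lfloor>(real L - 1) / 2\<rfloor>" by (auto simp: ZL_def)
    have "- int L \<le> \<lfloor>- (real L - 1) / 2\<rfloor>" by (simp add: le_floor_iff)
    then have "- int L \<le> x" using x by linarith
    moreover have "\<lfloor>(real L - 1) / 2\<rfloor> \<le> int L" by (simp add: floor_le_iff)
    then have "x \<le> int L" using x by linarith
    ultimately show "x \<in> {- int L .. int L}" by simp
  qed
  then have "card (ZL L) \<le> card {- int L .. int L}" by (rule card_mono[rotated]) simp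
  also have "\<dots> = 2 * L + 1" by simp
  finally show ?thesis .
qed

lemma cos_L:
  assumes L: "100 \<le> L" and S: "0 < S" "S \<le> real L"
  shows "1 - real (2 * L + 1) * exp (- S/100) \<le> measure_pmf.prob
     (map_pmf (\<lambda>f. let X0 = {k \<in> ZLplus L. f k} in X0 \<union> uminus ` X0)
       (Pi_pmf (ZLplus L) False (\<lambda>_. bernoulli_pmf (S / real L))))
     {Xi. \<forall>a\<in>ZL L. S / 32 \<le> cosV L Xi a}"
proof -
  define I where "I = ZLplus L"
  define M where "M = \<lfloor>(real L - 1) / 2\<rfloor>"
  define p where "p = S / real L"
  have I: "I = {0..M}" by (simp add: I_def M_def ZLplus_def)
  have finI: "finite I" by (simp add: I)
  have Mb: "0 \<le> M" "(real L - 2) / 2 \<le> real_of_int M" "real_of_int M \<le> (real L - 1) / 2"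
    using M_bounds[of L] L by (auto simp: M_def)
  have Lpos: "0 < real L" using L by simp
  have p: "0 \<le> p" "p \<le> 1" using S Lpos by (auto simp: p_def field_simps)
  have pL: "p * real L = S" using Lpos by (simp add: p_def)
  let ?Q = "Pi_pmf I False (\<lambda>_. bernoulli_pmf p)"
  define w where "w a k = (if k = 0 then 0 else (cos (2 * pi * real_of_int a * real_of_int k / real L))\<^sup>2)" for a k :: int
  define B where "B a = {f. - (S/64) \<le> (\<Sum>k\<in>I. if f k then - w a k else 0)}" for a
  define G where "G = (\<lambda>f. let X0 = {k \<in> ZLplus L. f k} in X0 \<union> uminus ` X0) -`
     {Xi. \<forall>a\<in>ZL L. S / 32 \<le> cosV L Xi a}"
  have sub: "- G \<subseteq> (\<Union>a\<in>ZL L. B a)"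
  proof
    fix f assume f: "f \<in> - G"
    show "f \<in> (\<Union>a\<in>ZL L. B a)"
    proof (rule ccontr)
      assume nf: "f \<notin> (\<Union>a\<in>ZL L. B a)"
      have "S / 32 \<le> cosV L ({k\<in>I. f k} \<union> uminus ` {k\<in>I. f k}) a" if a: "a \<in> ZL L" for a
      proof -
        have "f \<notin> B a" using nf a by auto
        moreover have "(\<Sum>k\<in>I. if f k then - w a k else 0) = - (\<Sum>k\<in>I. if f k then w a k else 0)"
          by (subst sum_negf[symmetric]) (rule sum.cong, auto)
        ultimately have "S / 64 < (\<Sum>k\<in>I. if f k then w a k else 0)" by (simp add: B_def)
        then have "S / 64 < (\<Sum>k\<in>I. if f k then (if k = 0 then 0 else (cos (2 * pi * real_of_int a * real_of_int k / real L))\<^sup>2) else 0)"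
          unfolding w_def .
        with cosV_lower[OF finI, of f a L] show ?thesis by linarith
      qed
      then have "f \<in> G" by (simp add: G_def I_def Let_def)
      then show False using f by simp
    qed
  qed
  have Bb: "measure_pmf.prob ?Q (B a) \<le> exp (- S/100)" for a
  proof -
    have "measure_pmf.prob ?Q (B a) \<le> exp (- (- (S/64)) + p * (\<Sum>k\<in>I. exp (- w a k) - 1))"
      unfolding B_def by (rule tail_bound[OF finI p])
    also have "\<dots> \<le> exp (- S/100)"
    proof -
      have w01: "0 \<le> w a k" "w a k \<le> 1" for k using cos2_le1 by (auto simp: w_def)
      have s1: "(\<Sum>k\<in>I. exp (- w a k) - 1) \<le> (\<Sum>k\<in>I. - (3/5) * w a k)"
        by (rule sum_mono) (rule exp_neg_convex[OF w01])
      have "(\<Sum>k\<in>I. w a k) = w a 0 + (\<Sum>k\<in>{1..M}. w a k)"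
      proof -
        have "I = insert 0 {1..M}" using Mb by (auto simp: I)
        then show ?thesis by simp
      qed
      also have "\<dots> = (\<Sum>k\<in>{1..M}. (cos ((2 * pi * real_of_int a / real L) * of_int k))\<^sup>2)"
        by (simp add: w_def)
      finally have sw: "(\<Sum>k\<in>I. w a k) = (\<Sum>k\<in>{1..M}. (cos ((2 * pi * real_of_int a / real L) * of_int k))\<^sup>2)" .
      define N where "N = nat (M div 2)"
      have N2: "2 * int N \<le> M" using Mb by (simp add: N_def)
      have "M - 1 \<le> 2 * int N" using Mb by (simp add: N_def)
      then have "real_of_int (M - 1) \<le> real_of_int (2 * int N)" by (simp only: of_int_le_iff)
      then have Nb: "(real L - 4) / 4 \<le> real N" using Mb by simp
      have "7/32 * real N \<le> (\<Sum>k\<in>I. w a k)" unfolding sw by (rule sum_cos_lower[OF N2])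
      then have "7/32 * ((real L - 4) / 4) \<le> (\<Sum>k\<in>I. w a k)" using Nb by linarith
      then have "p * (7/32 * ((real L - 4) / 4)) \<le> p * (\<Sum>k\<in>I. w a k)" using p by (intro mult_left_mono) auto
      moreover have "p * (7/32 * ((real L - 4) / 4)) = 7/128 * (S - 4 * p)"
      proof -
        have "p * (7/32 * ((real L - 4) / 4)) = 7/128 * (p * real L - 4 * p)" by (simp add: algebra_simps)
        then show ?thesis using pL by simp
      qed
      moreover have "4 * p \<le> S / 25"
      proof -
        have "4 * p * 100 \<le> 4 * p * real L" using p L by (intro mult_left_mono) auto
        then show ?thesis using pL by simp
      qed
      moreover have "p * (\<Sum>k\<in>I. exp (- w a k) - 1) \<le> p * (\<Sum>k\<in>I. - (3/5) * w a k)"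
        using s1 p by (intro mult_left_mono) auto
      moreover have "p * (\<Sum>k\<in>I. - (3/5) * w a k) = - (3/5) * (p * (\<Sum>k\<in>I. w a k))"
      proof -
        have "(\<Sum>k\<in>I. - (3/5) * w a k) = - (3/5) * (\<Sum>k\<in>I. w a k)" by (rule sum_distrib_left[symmetric])
        then show ?thesis by simp
      qed
      ultimately have t1: "7/128 * (S - 4 * p) \<le> p * (\<Sum>k\<in>I. w a k)"
        and t2: "4 * p \<le> S / 25"
        and t3: "p * (\<Sum>k\<in>I. exp (- w a k) - 1) \<le> - (3 / 5) * (p * (\<Sum>k\<in>I. w a k))"
        by linarith+
      define T where "T = p * (\<Sum>k\<in>I. w a k)"
      define U where "U = p * (\<Sum>k\<in>I. exp (- w a k) - 1)"
      have t1': "7 * S - 28 * p \<le> 128 * T" using t1 unfolding T_def[symmetric] by (simp add: algebra_simps)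
      have t2': "100 * p \<le> S" using t2 by simp
      have t3': "5 * U \<le> - 3 * T" using t3 unfolding T_def[symmetric] U_def[symmetric] by simp
      have "25 * S + 1600 * U \<le> - 16 * S" using t1' t2' t3' S by linarith
      then have "- (- (S/64)) + U \<le> - S/100" by simp
      then have "- (- (S/64)) + p * (\<Sum>k\<in>I. exp (- w a k) - 1) \<le> - S/100"
        unfolding U_def .
      then show ?thesis by simp
    qed
    finally show ?thesis .
  qed
  have f1: "1 - measure_pmf.prob ?Q (\<Union>a\<in>ZL L. B a) \<le> measure_pmf.prob ?Q G"
    by (rule prob_ge_compl[OF sub])
  have f2: "measure_pmf.prob ?Q (\<Union>a\<in>ZL L. B a) \<le> (\<Sum>a\<in>ZL L. measure_pmf.prob ?Q (B a))"
    by (rule measure_UNION_le) (auto simp: ZL_def)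
  have f3: "(\<Sum>a\<in>ZL L. measure_pmf.prob ?Q (B a)) \<le> (\<Sum>a\<in>ZL L. exp (- S/100))"
    by (rule sum_mono) (rule Bb)
  have f4: "(\<Sum>a\<in>ZL L. exp (- S/100)) = real (card (ZL L)) * exp (- S/100)" by simp
  have f5: "real (card (ZL L)) * exp (- S/100) \<le> real (2 * L + 1) * exp (- S/100)"
    by (rule mult_right_mono) (use card_ZL[of L] in auto)
  have "1 - real (2 * L + 1) * exp (- S/100) \<le> measure_pmf.prob ?Q G"
    using f1 f2 f3 f4 f5 by linarith
  then show ?thesis by (simp add: G_def I_def p_def)
qed



lemma lim1: "((\<lambda>L::nat. 1 - exp (1 - ln (real L) ^ 9 / 20) - exp (- (ln (real L) ^ 9 / 10))) \<longlongrightarrow> 1) sequentially"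
  by real_asymp

lemma lim2: "((\<lambda>L::nat. 1 - real (2 * L + 1) * exp (- (ln (real L) ^ 9 / 100))) \<longlongrightarrow> 1) sequentially"
  by real_asymp

theorem lemma5p8:
  fixes s :: "nat \<Rightarrow> real"
  assumes "\<forall>\<^sub>F L in sequentially. (ln (real L)) ^ 9 \<le> s L \<and> s L \<le> real L / (ln (real L)) ^ 5"
  shows "typically_sparse (sym_bernoulli_support s) s (1/2) 2
         \<and> cosine_generic (sym_bernoulli_support s) (\<lambda>L. s L / 32)"
proof -
  have ev: "\<forall>\<^sub>F L in sequentially. 100 \<le> L \<and> (ln (real L)) ^ 9 \<le> s L \<and> 0 < s L \<and> s L \<le> real L"
    using assms eventually_ge_at_top[of "100::nat"]
  proof eventually_elim
    case (elim L)
    have L: "100 \<le> L" and s1: "ln (real L) ^ 9 \<le> s L" and s2: "s L \<le> real L / ln (real L) ^ 5"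
      using elim by auto
    have "exp 1 \<le> real L" using exp_le L by linarith
    then have l1: "1 \<le> ln (real L)" using L by (subst ln_ge_iff) auto
    then have "0 < ln (real L) ^ 9" by simp
    then have pos: "0 < s L" using s1 by linarith
    have "1 \<le> ln (real L) ^ 5" using l1 by (simp add: one_le_power)
    then have "real L / ln (real L) ^ 5 \<le> real L" using L by (simp add: divide_le_eq)
    then show ?case using L s1 pos s2 by linarith
  qed
  have A: "typically_sparse (sym_bernoulli_support s) s (1/2) 2"
    unfolding typically_sparse_def
  proof (rule tendsto_sandwich[OF _ _ lim1 tendsto_const])
    show "\<forall>\<^sub>F L in sequentially. 1 - exp (1 - ln (real L) ^ 9 / 20) - exp (- (ln (real L) ^ 9 / 10))
       \<le> measure_pmf.prob (sym_bernoulli_support s L) {Xi. 1/2 * s L \<le> real (card Xi) \<and> real (card Xi) \<le> 2 * s L}"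
      using ev
    proof eventually_elim
      case (elim L)
      then have L: "100 \<le> L" and S: "0 < s L" "s L \<le> real L" and s1: "ln (real L) ^ 9 \<le> s L" by auto
      have e1: "exp (1 - s L / 20) \<le> exp (1 - ln (real L) ^ 9 / 20)" using s1 by simp
      have e2: "exp (- s L / 10) \<le> exp (- (ln (real L) ^ 9 / 10))" using s1 by simp
      note P = sparse_L[OF L S]
      show ?case unfolding sym_bernoulli_support_def using e1 e2 P by linarith
    qed
    show "\<forall>\<^sub>F L in sequentially. measure_pmf.prob (sym_bernoulli_support s L)
        {Xi. 1/2 * s L \<le> real (card Xi) \<and> real (card Xi) \<le> 2 * s L} \<le> 1"
      by simp
  qed
  have B: "cosine_generic (sym_bernoulli_support s) (\<lambda>L. s L / 32)"
    unfolding cosine_generic_def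
  proof (intro exI[of _ "\<lambda>_. 0"] conjI)
    show "((\<lambda>_. 0::real) \<longlongrightarrow> 0) sequentially" by simp
    show "((\<lambda>L. measure_pmf.prob (sym_bernoulli_support s L)
        {Xi. \<forall>a\<in>ZL L. s L / 32 * (1 - 0) \<le> cosV L Xi a}) \<longlongrightarrow> 1) sequentially"
    proof (rule tendsto_sandwich[OF _ _ lim2 tendsto_const])
      show "\<forall>\<^sub>F L in sequentially. 1 - real (2 * L + 1) * exp (- (ln (real L) ^ 9 / 100))
         \<le> measure_pmf.prob (sym_bernoulli_support s L) {Xi. \<forall>a\<in>ZL L. s L / 32 * (1 - 0) \<le> cosV L Xi a}"
        using ev
      proof eventually_elim
        case (elim L)
        then have L: "100 \<le> L" and S: "0 < s L" "s L \<le> real L" and s1: "ln (real L) ^ 9 \<le> s L" by auto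
        have "exp (- s L / 100) \<le> exp (- (ln (real L) ^ 9 / 100))" using s1 by simp
        then have e: "real (2 * L + 1) * exp (- s L / 100) \<le> real (2 * L + 1) * exp (- (ln (real L) ^ 9 / 100))"
          by (rule mult_left_mono) simp
        note P = cos_L[OF L S]
        have "1 - real (2 * L + 1) * exp (- (ln (real L) ^ 9 / 100))
         \<le> measure_pmf.prob (sym_bernoulli_support s L) {Xi. \<forall>a\<in>ZL L. s L / 32 \<le> cosV L Xi a}"
          unfolding sym_bernoulli_support_def using e P by linarith
        then show ?case by simp
      qed
      show "\<forall>\<^sub>F L in sequentially. measure_pmf.prob (sym_bernoulli_support s L)
          {Xi. \<forall>a\<in>ZL L. s L / 32 * (1 - 0) \<le> cosV L Xi a} \<le> 1"
        by simp
    qed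
  qed
  from A B show ?thesis ..
qed


end
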